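(* Let $\mathfrak g$ be an affine Kac–Moody algebra with index set $I$, Weyl group $W$ and simple reflections $r_i$ ($i\in I$). Let $B$ be a perfect crystal of level $l$, let $\lambda$ be a dominant integral weight of level $l$, and let $\overline{b}_k$, $\lambda_k$ ($k\ge 1$) and the isomorphism $\mathcal B(\lambda)\simeq\mathcal P(\lambda,B)$ be as in the context. Fix a positive integer $d$ and elements $i^{(j)}_a\in I$ ($j\ge1$, $1\le a\le d$); set $i^{(j)}_{d+1}:=i^{(j+1)}_1$. Define $w^{(0)}=1$ and, for $k>0$, $w^{(k)}=r_{i^{(j)}_a}w^{(k-1)}$, where $k=(j-1)d+a$ with $j\ge1$, $1\le a\le d$. Define $b^{(j)}_0=\overline{b}_j$ and $b^{(j)}_a=\tilde f_{i^{(j)}_a}^{\varphi_{i^{(j)}_a}(b^{(j)}_{a-1})}b^{(j)}_{a-1}$ for $1\le a\le d$, and define $B^{(j)}_0=\{\overline b_j\}$, $B^{(j)}_a=\bigcup_{n\ge0}\tilde f_{i^{(j)}_a}^nB^{(j)}_{a-1}\setminus\{0\}$ ($1\le a\le d$). Assume: (III) for all $j\ge1$ and $1\le a\le d$, $\langle\lambda_j,h_{i^{(j)}_a}\rangle\le\varepsilon_{i^{(j)}_a}(b)$ for all $b\in B^{(j)}_{a-1}$. Assume moreover that for every $j\ge1$: $\varepsilon_{i^{(j)}_{a+1}}(b^{(j)}_a)=0$ and $\varphi_{i^{(j)}_{a+1}}(b^{(j)}_a)>0$ for $a=1,\dots,d$, and $b^{(j+1)}_0=\tilde f_{i^{(j+1)}_1}^{m^{(j+1)}}b^{(j)}_d$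 with $m^{(j+1)}=\langle\lambda_{j+1},h_{i^{(j+1)}_1}\rangle$. Then for every $k\ge0$, writing $k=(j-1)d+a$ with $j\ge1$, $1\le a\le d$ if $k>0$, and $j=1$, $a=0$ if $k=0$, the extremal vector $u_{w^{(k)}\lambda}$ corresponds under $\mathcal B(\lambda)\simeq\mathcal P(\lambda,B)$ to the path $$u_{w^{(k)}\lambda}=\cdots\otimes\overline b_{j+2}\otimes\overline b_{j+1}\otimes\big(b^{(j)}_a\big)^{\otimes j}.$$
   Context: $U_q(\mathfrak g)$ is the quantized enveloping algebra, $\mathcal B(\lambda)$ the crystal base of the irreducible integrable highest weight module $V(\lambda)$ with highest weight element $u_\lambda$; $\tilde e_i,\tilde f_i$ are Kashiwara operators, $\varepsilon_i(b)=\max\{n:\tilde e_i^nb\ne0\}$, $\varphi_i(b)=\max\{n:\tilde f_i^nb\neq0\}$, and tensor products of crystals follow Kashiwara's tensor product rule (convention of Kang–Kashiwara–Misra–Miwa–Nakashima–Nakayashiki). $B$ is a perfect crystal of level $l$ (a crystal of a finite-dimensional $U_q'(\mathfrak g)$-module in the sense of Kang et al.); for each level-$l$ dominant weight $\mu$ there is a unique $b(\mu)\in B$ with $\varphi(b(\mu))=\mu$ (where $\varphi(b)=\sum_i\varphi_i(b)\Lambda_i$, $\varepsilon(b)=\sum_i\varepsilon_i(b)\Lambda_i$), and $\sigma\mu:=\varepsilon(b(\mu))$. Set $\lambda_k=\sigma^k\lambda$ ($\lambda_0=\lambda$) and $\overline b_k=b(\lambda_{k-1})$. Perfectness gives crystal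 isomorphisms $\mathcal B(\lambda_{k-1})\simeq\mathcal B(\lambda_k)\otimes B$, $u_{\lambda_{k-1}}\mapsto u_{\lambda_k}\otimes\overline b_k$; iterating yields $\mathcal B(\lambda)\simeq\mathcal P(\lambda,B)=\{\cdots\otimes p(2)\otimes p(1): p(j)\in B,\ p(k)=\overline b_k\text{ for }k\gg1\}$, with $u_\lambda\mapsto\cdots\otimes\overline b_2\otimes\overline b_1$. For $w\in W$, $u_{w\lambda}$ denotes the unique element of $\mathcal B(\lambda)$ of weight $w\lambda$ (the extremal vector; the weight space $V(\lambda)_{w\lambda}$ is one-dimensional). *)

theory Defs
  imports Complex_Main
begin

text \<open>Convention: A i j = <h_i, alpha_j>. Weights in P_cl are represented by their
coordinates mu i = <h_i, mu> in the basis of fundamental weights Lambda_i, so that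
cl(alpha_j) has coordinates (\<lambda>i. A i j).\<close>

definition gcm :: "('i \<Rightarrow> 'i \<Rightarrow> int) \<Rightarrow> bool" where
  "gcm A \<longleftrightarrow> (\<forall>i. A i i = 2) \<and> (\<forall>i j. i \<noteq> j \<longrightarrow> A i j \<le> 0)
     \<and> (\<forall>i j. A i j = 0 \<longleftrightarrow> A j i = 0)"

definition indecomposable :: "('i \<Rightarrow> 'i \<Rightarrow> int) \<Rightarrow> bool" where
  "indecomposable A \<longleftrightarrow>
     (\<forall>J. J \<noteq> {} \<and> J \<noteq> UNIV \<longrightarrow> (\<exists>j\<in>J. \<exists>k\<in>-J. A j k \<noteq> 0))"

text \<open>Kac, Infinite dimensional Lie algebras, Thm 4.3, type (Aff).\<close>
definition affine_gcm :: "('i::finite \<Rightarrow> 'i \<Rightarrow> int) \<Rightarrow> bool" where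
  "affine_gcm A \<longleftrightarrow> gcm A \<and> indecomposable A \<and>
     (\<exists>u::'i \<Rightarrow> real. (\<forall>i. u i > 0) \<and> (\<forall>i. (\<Sum>j\<in>UNIV. of_int (A i j) * u j) = 0) \<and>
        (\<forall>v::'i \<Rightarrow> real. (\<forall>i. (\<Sum>j\<in>UNIV. of_int (A i j) * v j) = 0)
              \<longrightarrow> (\<exists>t. v = (\<lambda>j. t * u j)))) \<and>
     (\<forall>v::'i \<Rightarrow> real. (\<forall>i. (\<Sum>j\<in>UNIV. of_int (A i j) * v j) \<ge> 0)
              \<longrightarrow> (\<forall>i. (\<Sum>j\<in>UNIV. of_int (A i j) * v j) = 0))"

text \<open>Labels a_i of delta = sum a_i alpha_i, and dual labels a_i^vee of the canonical
central element c = sum a_i^vee h_i.\<close>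
definition null_root_coeffs :: "('i::finite \<Rightarrow> 'i \<Rightarrow> int) \<Rightarrow> ('i \<Rightarrow> nat) \<Rightarrow> bool" where
  "null_root_coeffs A a \<longleftrightarrow> (\<forall>i. a i > 0) \<and> (\<forall>i. (\<Sum>j\<in>UNIV. A i j * int (a j)) = 0)
     \<and> Gcd (range a) = 1"

definition null_coroot_coeffs :: "('i::finite \<Rightarrow> 'i \<Rightarrow> int) \<Rightarrow> ('i \<Rightarrow> nat) \<Rightarrow> bool" where
  "null_coroot_coeffs A c \<longleftrightarrow> (\<forall>i. c i > 0) \<and> (\<forall>j. (\<Sum>i\<in>UNIV. int (c i) * A i j) = 0)
     \<and> Gcd (range c) = 1"

definition delta_coeffs :: "('i::finite \<Rightarrow> 'i \<Rightarrow> int) \<Rightarrow> 'i \<Rightarrow> nat" where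
  "delta_coeffs A = (THE a. null_root_coeffs A a)"

definition cvee :: "('i::finite \<Rightarrow> 'i \<Rightarrow> int) \<Rightarrow> 'i \<Rightarrow> nat" where
  "cvee A = (THE c. null_coroot_coeffs A c)"

text \<open>Kac's node 0: a_0^vee = 1, and a_0 = 1 except for A_{2n}^(2) where node 0 is the
unique node with a^vee = 1.\<close>
definition special_node :: "('i::finite \<Rightarrow> 'i \<Rightarrow> int) \<Rightarrow> 'i \<Rightarrow> bool" where
  "special_node A i0 \<longleftrightarrow> cvee A i0 = 1 \<and>
     (delta_coeffs A i0 = 1 \<or> (\<forall>j. cvee A j = 1 \<longrightarrow> j = i0))"

definition level :: "('i::finite \<Rightarrow> 'i \<Rightarrow> int) \<Rightarrow> ('i \<Rightarrow> nat) \<Rightarrow> nat" where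
  "level A mu = (\<Sum>i\<in>UNIV. cvee A i * mu i)"

definition levelz :: "('i::finite \<Rightarrow> 'i \<Rightarrow> int) \<Rightarrow> ('i \<Rightarrow> int) \<Rightarrow> int" where
  "levelz A mu = (\<Sum>i\<in>UNIV. int (cvee A i) * mu i)"

text \<open>A crystal: weight map to P_cl and Kashiwara operators; None stands for 0.\<close>
record ('i, 'b) crystal =
  wt :: "'b \<Rightarrow> 'i \<Rightarrow> int"
  ee :: "'i \<Rightarrow> 'b \<Rightarrow> 'b option"
  ff :: "'i \<Rightarrow> 'b \<Rightarrow> 'b option"

definition iter_opt :: "('b \<Rightarrow> 'b option) \<Rightarrow> nat \<Rightarrow> 'b \<Rightarrow> 'b option" where
  "iter_opt g n b = ((\<lambda>x. Option.bind x g) ^^ n) (Some b)"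

definition maxiter :: "('b \<Rightarrow> 'b option) \<Rightarrow> 'b \<Rightarrow> nat" where
  "maxiter g b = (GREATEST n. iter_opt g n b \<noteq> None)"

definition eps :: "('i, 'b, 'z) crystal_scheme \<Rightarrow> 'i \<Rightarrow> 'b \<Rightarrow> nat" where
  "eps C i b = maxiter (ee C i) b"

definition phi :: "('i, 'b, 'z) crystal_scheme \<Rightarrow> 'i \<Rightarrow> 'b \<Rightarrow> nat" where
  "phi C i b = maxiter (ff C i) b"

definition eps_vec :: "('i, 'b, 'z) crystal_scheme \<Rightarrow> 'b \<Rightarrow> 'i \<Rightarrow> nat" where
  "eps_vec C b = (\<lambda>i. eps C i b)"

definition phi_vec :: "('i, 'b, 'z) crystal_scheme \<Rightarrow> 'b \<Rightarrow> 'i \<Rightarrow> nat" where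
  "phi_vec C b = (\<lambda>i. phi C i b)"

definition is_crystal :: "('i \<Rightarrow> 'i \<Rightarrow> int) \<Rightarrow> ('i, 'b, 'z) crystal_scheme \<Rightarrow> bool" where
  "is_crystal A C \<longleftrightarrow>
     (\<forall>i b b'. ff C i b = Some b' \<longleftrightarrow> ee C i b' = Some b) \<and>
     (\<forall>i b b'. ff C i b = Some b' \<longrightarrow> wt C b' = (\<lambda>j. wt C b j - A j i)) \<and>
     (\<forall>i b. \<exists>n. iter_opt (ee C i) n b = None) \<and>
     (\<forall>i b. \<exists>n. iter_opt (ff C i) n b = None) \<and>
     (\<forall>i b. int (phi C i b) - int (eps C i b) = wt C b i)"

text \<open>Kashiwara's tensor product rule (KKMMNN convention) for f_i on B \<otimes> B.\<close>
definition tensor_f :: "('i, 'b, 'z) crystal_scheme \<Rightarrow> 'i \<Rightarrow> 'b \<times> 'b \<Rightarrow> ('b \<times> 'b) option" where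
  "tensor_f C i x = (case x of (b1, b2) \<Rightarrow>
     if eps C i b2 < phi C i b1 then map_option (\<lambda>y. (y, b2)) (ff C i b1)
     else map_option (\<lambda>y. (b1, y)) (ff C i b2))"

definition tensor_connected :: "('i, 'b, 'z) crystal_scheme \<Rightarrow> bool" where
  "tensor_connected C \<longleftrightarrow>
     (let E = {(x, z). \<exists>i. tensor_f C i x = Some z} in \<forall>x y. (x, y) \<in> (E \<union> E\<inverse>)\<^sup>*)"

text \<open>Perfect crystal of level l (KKMMNN, Def. 4.6.1); the crystal is the whole
(finite) type 'b.\<close>
definition perfect_crystal ::
  "('i::finite \<Rightarrow> 'i \<Rightarrow> int) \<Rightarrow> 'i \<Rightarrow> ('i, 'b::finite, 'z) crystal_scheme \<Rightarrow> nat \<Rightarrow> bool" where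
  "perfect_crystal A i0 C l \<longleftrightarrow> l > 0 \<and> is_crystal A C \<and>
     (\<forall>b. levelz A (wt C b) = 0) \<and>
     tensor_connected C \<and>
     (\<exists>lam0. (\<forall>b. \<exists>n::'i \<Rightarrow> nat. n i0 = 0 \<and>
                  wt C b = (\<lambda>j. lam0 j - (\<Sum>i\<in>UNIV. int (n i) * A j i)))
             \<and> card {b. wt C b = lam0} = 1) \<and>
     (\<forall>b. level A (eps_vec C b) \<ge> l) \<and>
     bij_betw (eps_vec C) {b. level A (eps_vec C b) = l} {mu. level A mu = l} \<and>
     bij_betw (phi_vec C) {b. level A (phi_vec C b) = l} {mu. level A mu = l}"

definition bmu :: "('i, 'b, 'z) crystal_scheme \<Rightarrow> ('i \<Rightarrow> nat) \<Rightarrow> 'b" where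
  "bmu C mu = (THE b. phi_vec C b = mu)"

definition sigma :: "('i, 'b, 'z) crystal_scheme \<Rightarrow> ('i \<Rightarrow> nat) \<Rightarrow> 'i \<Rightarrow> nat" where
  "sigma C mu = eps_vec C (bmu C mu)"

definition lamk :: "('i, 'b, 'z) crystal_scheme \<Rightarrow> ('i \<Rightarrow> nat) \<Rightarrow> nat \<Rightarrow> 'i \<Rightarrow> nat" where
  "lamk C lam k = (sigma C ^^ k) lam"

text \<open>bbar C lam k = b-bar_k = b(lambda_{k-1}) for k >= 1.\<close>
definition bbar :: "('i, 'b, 'z) crystal_scheme \<Rightarrow> ('i \<Rightarrow> nat) \<Rightarrow> nat \<Rightarrow> 'b" where
  "bbar C lam k = bmu C (lamk C lam (k - 1))"

text \<open>Paths are 0-indexed: p n is the tensor factor p(n+1) of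
 ... \<otimes> p(2) \<otimes> p(1).\<close>
definition ground :: "('i, 'b, 'z) crystal_scheme \<Rightarrow> ('i \<Rightarrow> nat) \<Rightarrow> nat \<Rightarrow> 'b" where
  "ground C lam = (\<lambda>n. bbar C lam (Suc n))"

definition tail_start :: "('i, 'b, 'z) crystal_scheme \<Rightarrow> ('i \<Rightarrow> nat) \<Rightarrow> (nat \<Rightarrow> 'b) \<Rightarrow> nat" where
  "tail_start C lam p = (LEAST N. \<forall>n\<ge>N. p n = ground C lam n)"

text \<open>For a truncation T, the path is u_{lambda_T} \<otimes> p(T) \<otimes> ... \<otimes> p(1),
u_{lambda_T} highest weight (eps = 0, phi = lambda_T). pre_ep gives (eps_i, phi_i) of
u \<otimes> p(T) \<otimes> ... \<otimes> p(T-k+1) (k factors after u).\<close>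
fun pre_ep :: "('i, 'b, 'z) crystal_scheme \<Rightarrow> ('i \<Rightarrow> nat) \<Rightarrow> nat \<Rightarrow> (nat \<Rightarrow> 'b) \<Rightarrow> 'i \<Rightarrow> nat
    \<Rightarrow> int \<times> int" where
  "pre_ep C tp T p i 0 = (0, int (tp i))"
| "pre_ep C tp T p i (Suc k) =
     (let e1 = fst (pre_ep C tp T p i k); f1 = snd (pre_ep C tp T p i k);
          b = p (T - Suc k); e2 = int (eps C i b); f2 = int (phi C i b)
      in (max e1 (e1 + e2 - f1), max f2 (f1 + f2 - e2)))"

fun pre_f :: "('i, 'b, 'z) crystal_scheme \<Rightarrow> ('i \<Rightarrow> nat) \<Rightarrow> nat \<Rightarrow> (nat \<Rightarrow> 'b) \<Rightarrow> 'i \<Rightarrow> nat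
    \<Rightarrow> (nat \<Rightarrow> 'b) option" where
  "pre_f C tp T p i 0 = None"
| "pre_f C tp T p i (Suc k) =
     (let b = p (T - Suc k); f1 = snd (pre_ep C tp T p i k)
      in if int (eps C i b) < f1 then pre_f C tp T p i k
         else map_option (\<lambda>b'. p(T - Suc k := b')) (ff C i b))"

fun pre_e :: "('i, 'b, 'z) crystal_scheme \<Rightarrow> ('i \<Rightarrow> nat) \<Rightarrow> nat \<Rightarrow> (nat \<Rightarrow> 'b) \<Rightarrow> 'i \<Rightarrow> nat
    \<Rightarrow> (nat \<Rightarrow> 'b) option" where
  "pre_e C tp T p i 0 = None"
| "pre_e C tp T p i (Suc k) =
     (let b = p (T - Suc k); f1 = snd (pre_ep C tp T p i k)
      in if int (eps C i b) \<le> f1 then pre_e C tp T p i k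
         else map_option (\<lambda>b'. p(T - Suc k := b')) (ee C i b))"

definition path_f :: "('i, 'b, 'z) crystal_scheme \<Rightarrow> ('i \<Rightarrow> nat) \<Rightarrow> 'i \<Rightarrow> (nat \<Rightarrow> 'b)
    \<Rightarrow> (nat \<Rightarrow> 'b) option" where
  "path_f C lam i p = (let T = Suc (tail_start C lam p) in pre_f C (lamk C lam T) T p i T)"

definition path_e :: "('i, 'b, 'z) crystal_scheme \<Rightarrow> ('i \<Rightarrow> nat) \<Rightarrow> 'i \<Rightarrow> (nat \<Rightarrow> 'b)
    \<Rightarrow> (nat \<Rightarrow> 'b) option" where
  "path_e C lam i p = (let T = Suc (tail_start C lam p) in pre_e C (lamk C lam T) T p i T)"

definition refl :: "('i \<Rightarrow> 'i \<Rightarrow> int) \<Rightarrow> 'i \<Rightarrow> ('i \<Rightarrow> int) \<Rightarrow> 'i \<Rightarrow> int" where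
  "refl A i mu = (\<lambda>j. mu j - mu i * A j i)"

text \<open>weyl_act A [i_k, ..., i_1] mu = r_{i_k} ... r_{i_1} mu.\<close>
fun weyl_act :: "('i \<Rightarrow> 'i \<Rightarrow> int) \<Rightarrow> 'i list \<Rightarrow> ('i \<Rightarrow> int) \<Rightarrow> 'i \<Rightarrow> int" where
  "weyl_act A [] mu = mu"
| "weyl_act A (i # ws) mu = refl A i (weyl_act A ws mu)"

text \<open>Extremal vector u_{w lambda} in P(lambda,B) for w = r_{i_k} ... r_{i_1}, via
u_{r_i w lambda} = f_i^{<w lambda, h_i>} u_{w lambda} if <w lambda,h_i> >= 0 and
e_i^{-<w lambda, h_i>} u_{w lambda} otherwise; u_lambda = ground state path.\<close>
fun ext_path :: "('i \<Rightarrow> 'i \<Rightarrow> int) \<Rightarrow> ('i, 'b, 'z) crystal_scheme \<Rightarrow> ('i \<Rightarrow> nat) \<Rightarrow> 'i list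
    \<Rightarrow> (nat \<Rightarrow> 'b) option" where
  "ext_path A C lam [] = Some (ground C lam)"
| "ext_path A C lam (i # ws) =
     (let n = weyl_act A ws (\<lambda>j. int (lam j)) i
      in Option.bind (ext_path A C lam ws)
           (\<lambda>p. if 0 \<le> n then iter_opt (path_f C lam i) (nat n) p
                else iter_opt (path_e C lam i) (nat (- n)) p))"

definition fmax :: "('i, 'b, 'z) crystal_scheme \<Rightarrow> 'i \<Rightarrow> 'b \<Rightarrow> 'b" where
  "fmax C i b = the (iter_opt (ff C i) (phi C i b) b)"

text \<open>bseq C lam idx j a = b^{(j)}_a, idx j a = i^{(j)}_a.\<close>
fun bseq :: "('i, 'b, 'z) crystal_scheme \<Rightarrow> ('i \<Rightarrow> nat) \<Rightarrow> (nat \<Rightarrow> nat \<Rightarrow> 'i) \<Rightarrow> nat \<Rightarrow> nat \<Rightarrow> 'b" where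
  "bseq C lam idx j 0 = bbar C lam j"
| "bseq C lam idx j (Suc a) = fmax C (idx j (Suc a)) (bseq C lam idx j a)"

fun Bset :: "('i, 'b, 'z) crystal_scheme \<Rightarrow> ('i \<Rightarrow> nat) \<Rightarrow> (nat \<Rightarrow> nat \<Rightarrow> 'i) \<Rightarrow> nat \<Rightarrow> nat \<Rightarrow> 'b set" where
  "Bset C lam idx j 0 = {bbar C lam j}"
| "Bset C lam idx j (Suc a) =
     {b'. \<exists>b\<in>Bset C lam idx j a. \<exists>n. iter_opt (ff C (idx j (Suc a))) n b = Some b'}"

text \<open>wword idx d k is a word for w^{(k)}: w^{(k)} = r_{i^{(j)}_a} w^{(k-1)},
k = (j-1)d + a.\<close>
fun wword :: "(nat \<Rightarrow> nat \<Rightarrow> 'i) \<Rightarrow> nat \<Rightarrow> nat \<Rightarrow> 'i list" where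
  "wword idx d 0 = []"
| "wword idx d (Suc k) = idx (k div d + 1) (k mod d + 1) # wword idx d k"

definition pos_j :: "nat \<Rightarrow> nat \<Rightarrow> nat" where
  "pos_j d k = (if k = 0 then 1 else (k - 1) div d + 1)"

definition pos_a :: "nat \<Rightarrow> nat \<Rightarrow> nat" where
  "pos_a d k = (if k = 0 then 0 else (k - 1) mod d + 1)"

end

theory Submission
  imports Defs
begin


lemma funpow_bind_None: "((\<lambda>x. Option.bind x (g::'a \<Rightarrow> 'a option)) ^^ n) None = None"
  by (induction n) simp_all

lemma iter_opt_0[simp]: "iter_opt g 0 b = Some b"
  by (simp add: iter_opt_def)

lemma iter_opt_Suc: "iter_opt g (Suc n) b = Option.bind (g b) (iter_opt g n)"
  unfolding iter_opt_def funpow_Suc_right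
  by (cases "g b") (simp_all add: funpow_bind_None)

lemma iter_opt_add: "iter_opt g (m + n) b = Option.bind (iter_opt g m b) (iter_opt g n)"
proof (induction m arbitrary: b)
  case 0 then show ?case by simp
next
  case (Suc m)
  show ?case by (cases "g b") (simp_all add: iter_opt_Suc Suc.IH)
qed

lemma iter_opt_None_mono:
  assumes "iter_opt g n b = None" "n \<le> m" shows "iter_opt g m b = None"
proof -
  obtain k where "m = n + k" using assms(2) le_Suc_ex by blast
  then show ?thesis using assms(1) by (simp add: iter_opt_add)
qed

lemma maxiter_char:
  assumes "iter_opt g N b = None"
  shows "iter_opt g n b \<noteq> None \<longleftrightarrow> n \<le> maxiter g b"
proof -
  have bnd: "\<forall>y. iter_opt g y b \<noteq> None \<longrightarrow> y \<le> N"
    using assms iter_opt_None_mono by (metis nat_le_linear)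
  have P0: "iter_opt g 0 b \<noteq> None" by simp
  have G: "iter_opt g (maxiter g b) b \<noteq> None"
    unfolding maxiter_def by (rule GreatestI_nat[where P="\<lambda>n. iter_opt g n b \<noteq> None", OF P0]) (use bnd in blast)
  show ?thesis
  proof
    assume "iter_opt g n b \<noteq> None"
    then show "n \<le> maxiter g b" unfolding maxiter_def
      by (rule Greatest_le_nat) (use bnd in blast)
  next
    assume "n \<le> maxiter g b"
    then show "iter_opt g n b \<noteq> None" using G iter_opt_None_mono[of g n b "maxiter g b"] by (cases "iter_opt g n b") simp_all
  qed
qed

lemma maxiter_Some:
  assumes "g b = Some b'" "iter_opt g N b = None"
  shows "maxiter g b = Suc (maxiter g b')"
proof -
  have N: "N \<noteq> 0" proof (rule notI) assume "N = 0" then show False using assms(2) by simp qed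
  then obtain N' where N': "N = Suc N'" using not0_implies_Suc by blast
  have b'N: "iter_opt g N' b' = None" using assms N' by (simp add: iter_opt_Suc)
  have sh: "\<And>n. iter_opt g (Suc n) b = iter_opt g n b'" using assms(1) by (simp add: iter_opt_Suc)
  have c1: "\<And>n. iter_opt g n b \<noteq> None \<longleftrightarrow> n \<le> maxiter g b" by (rule maxiter_char[OF assms(2)])
  have c2: "\<And>n. iter_opt g n b' \<noteq> None \<longleftrightarrow> n \<le> maxiter g b'" by (rule maxiter_char[OF b'N])
  have "iter_opt g (Suc (maxiter g b')) b \<noteq> None" unfolding sh by (rule iffD2[OF c2 le_refl])
  then have A: "Suc (maxiter g b') \<le> maxiter g b" by (rule iffD1[OF c1])
  have B: "maxiter g b \<le> Suc (maxiter g b')"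
  proof (cases "maxiter g b")
    case 0 then show ?thesis by simp
  next
    case (Suc x)
    then have "iter_opt g (Suc x) b \<noteq> None" using iffD2[OF c1] by simp
    then have "iter_opt g x b' \<noteq> None" unfolding sh .
    then have "x \<le> maxiter g b'" by (rule iffD1[OF c2])
    then show ?thesis using Suc by simp
  qed
  show ?thesis by (rule le_antisym[OF B A])
qed

lemma maxiter_None:
  assumes "g b = None" shows "maxiter g b = 0"
proof -
  have "iter_opt g (Suc 0) b = None" using assms by (simp only: iter_opt_Suc bind.simps)
  then have "\<not> Suc 0 \<le> maxiter g b" using maxiter_char[of g "Suc 0" b "Suc 0"] by blast
  then show ?thesis by arith
qed




locale cryst =
  fixes A :: "'i \<Rightarrow> 'i \<Rightarrow> int" and C :: "('i, 'b, 'z) crystal_scheme"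
  assumes cr: "is_crystal A C"
begin

lemma fe: "ff C i b = Some b' \<longleftrightarrow> ee C i b' = Some b"
  using cr unfolding is_crystal_def by blast
lemma wt_f: "ff C i b = Some b' \<Longrightarrow> wt C b' = (\<lambda>j. wt C b j - A j i)"
  using cr unfolding is_crystal_def by blast
lemma e_fin: "\<exists>n. iter_opt (ee C i) n b = None"
  using cr unfolding is_crystal_def by blast
lemma f_fin: "\<exists>n. iter_opt (ff C i) n b = None"
  using cr unfolding is_crystal_def by blast
lemma wt_pe: "int (phi C i b) - int (eps C i b) = wt C b i"
  using cr unfolding is_crystal_def by blast

lemma phi_f: "ff C i b = Some b' \<Longrightarrow> phi C i b = Suc (phi C i b')"
  unfolding phi_def using f_fin maxiter_Some by metis
lemma eps_f: "ff C i b = Some b' \<Longrightarrow> eps C i b' = Suc (eps C i b)"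
  unfolding eps_def using e_fin maxiter_Some fe by metis
lemma phi0: "phi C i b = 0 \<longleftrightarrow> ff C i b = None"
  using phi_f maxiter_None unfolding phi_def by (metis nat.distinct(1) not_None_eq)

lemma iterf:
  "iter_opt (ff C i) n b = Some b' \<Longrightarrow>
    phi C i b = n + phi C i b' \<and> eps C i b' = eps C i b + n \<and>
    wt C b' = (\<lambda>j. wt C b j - int n * A j i) \<and> fmax C i b' = fmax C i b"
proof (induction n arbitrary: b)
  case 0 then show ?case by simp
next
  case (Suc n)
  from Suc.prems obtain b1 where b1: "ff C i b = Some b1" "iter_opt (ff C i) n b1 = Some b'"
    by (cases "ff C i b") (auto simp: iter_opt_Suc)
  note IH = Suc.IH[OF b1(2)]
  have p: "phi C i b = Suc (phi C i b1)" by (rule phi_f[OF b1(1)])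
  have e: "eps C i b1 = Suc (eps C i b)" by (rule eps_f[OF b1(1)])
  have w: "wt C b1 = (\<lambda>j. wt C b j - A j i)" by (rule wt_f[OF b1(1)])
  have fm: "fmax C i b = fmax C i b1"
    unfolding fmax_def p by (simp add: iter_opt_Suc b1(1))
  show ?case using IH p e w fm by (auto simp: algebra_simps)
qed

lemma fmax_iter: "iter_opt (ff C i) (phi C i b) b = Some (fmax C i b)"
proof -
  obtain N where N: "iter_opt (ff C i) N b = None" using f_fin by blast
  have "iter_opt (ff C i) (phi C i b) b \<noteq> None"
    using maxiter_char[OF N] unfolding phi_def by simp
  then show ?thesis unfolding fmax_def by auto
qed

lemma fmax_props:
  "phi C i (fmax C i b) = 0 \<and> eps C i (fmax C i b) = eps C i b + phi C i b \<and>
   wt C (fmax C i b) = (\<lambda>j. wt C b j - int (phi C i b) * A j i)"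
  using iterf[OF fmax_iter] by simp

lemma fmax_phi0: "phi C i b = 0 \<Longrightarrow> fmax C i b = b"
  unfolding fmax_def by simp

end




locale pcr =
  fixes A :: "'i::finite \<Rightarrow> 'i \<Rightarrow> int" and C :: "('i, 'b::finite, 'z) crystal_scheme"
    and i0 :: 'i and l :: nat and lam :: "'i \<Rightarrow> nat"
  assumes perfect: "perfect_crystal A i0 C l" and lam_level: "level A lam = l"
begin

lemma cr: "is_crystal A C" using perfect unfolding perfect_crystal_def by blast

sublocale cryst A C by (rule cryst.intro[OF cr])

lemma levelz0: "levelz A (wt C b) = 0" using perfect unfolding perfect_crystal_def by blast
lemma bij_phi: "bij_betw (phi_vec C) {b. level A (phi_vec C b) = l} {mu. level A mu = l}"
  using perfect unfolding perfect_crystal_def by blast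

lemma level_eps: "level A (eps_vec C b) = level A (phi_vec C b)"
proof -
  have "int (level A (phi_vec C b)) = int (level A (eps_vec C b)) + levelz A (wt C b)"
    unfolding level_def levelz_def phi_vec_def eps_vec_def
    by (simp add: of_nat_sum sum.distrib[symmetric] algebra_simps wt_pe[symmetric])
  then show ?thesis using levelz0 by simp
qed

lemma bmu_phi:
  assumes "level A mu = l" shows "phi_vec C (bmu C mu) = mu"
proof -
  obtain b where b: "level A (phi_vec C b) = l" "phi_vec C b = mu"
    using bij_phi assms unfolding bij_betw_def by (smt (verit, best) image_iff mem_Collect_eq)
  have u: "phi_vec C b' = mu \<Longrightarrow> b' = b" for b'
    using bij_phi b assms unfolding bij_betw_def inj_on_def by auto
  have "bmu C mu = b" unfolding bmu_def using b u by blast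
  then show ?thesis using b by simp
qed

lemma sigma_level: "level A mu = l \<Longrightarrow> level A (sigma C mu) = l"
  unfolding sigma_def using level_eps bmu_phi by metis

lemma lamk_0: "lamk C lam 0 = lam" unfolding lamk_def by simp
lemma lamk_Suc: "lamk C lam (Suc k) = sigma C (lamk C lam k)" unfolding lamk_def by simp

lemma lamk_level: "level A (lamk C lam k) = l"
  by (induction k) (simp_all add: lamk_0 lamk_Suc lam_level sigma_level)

lemma bbar_phi: "phi C i (bbar C lam (Suc k)) = lamk C lam k i"
  using bmu_phi[OF lamk_level[of k]] unfolding bbar_def phi_vec_def by (simp add: fun_eq_iff)

lemma bbar_eps: "eps C i (bbar C lam (Suc k)) = lamk C lam (Suc k) i"
  unfolding bbar_def lamk_Suc sigma_def eps_vec_def by simp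

lemma bbar_wt: "wt C (bbar C lam (Suc k)) i = int (lamk C lam k i) - int (lamk C lam (Suc k) i)"
  using wt_pe[of i "bbar C lam (Suc k)"] bbar_phi bbar_eps by simp

end



context pcr begin

lemma pre_ep_cong:
  "k \<le> T \<Longrightarrow> (\<forall>m. T - k \<le> m \<longrightarrow> m < T \<longrightarrow> p m = q m) \<Longrightarrow>
   pre_ep C tp T p i k = pre_ep C tp T q i k"
proof (induction k)
  case 0 then show ?case by simp
next
  case (Suc k)
  have "p (T - Suc k) = q (T - Suc k)" using Suc.prems by simp
  moreover have "pre_ep C tp T p i k = pre_ep C tp T q i k"
    using Suc.prems by (intro Suc.IH) auto
  ultimately show ?case by (simp add: Let_def)
qed

lemma pre_ep_snd_nonneg: "0 \<le> snd (pre_ep C tp T p i k)"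
  by (induction k) (auto simp: Let_def)

lemma pre_ep_trunc:
  assumes "p T = bbar C lam (Suc T)"
  shows "pre_ep C (lamk C lam (Suc T)) (Suc T) p i (Suc k) = pre_ep C (lamk C lam T) T p i k"
proof (induction k)
  case 0
  have e: "Suc T - Suc 0 = T" by simp
  have pe: "eps C i (p T) = lamk C lam (Suc T) i" "phi C i (p T) = lamk C lam T i"
    using assms bbar_eps bbar_phi by simp_all
  show ?case
    apply (subst pre_ep.simps(2))
    unfolding e pe Let_def pre_ep.simps(1) by simp
next
  case (Suc k)
  have e: "Suc T - Suc (Suc k) = T - Suc k" by simp
  show ?case
    by (simp only: pre_ep.simps(2)[where T="Suc T" and k="Suc k"] pre_ep.simps(2)[where T="T" and k="k"] e Suc.IH)
qed

lemma pre_f_trunc: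
  assumes "p (Suc T) = bbar C lam (Suc (Suc T))" "p T = bbar C lam (Suc T)"
  shows "1 \<le> k \<Longrightarrow> k \<le> Suc T \<Longrightarrow>
    pre_f C (lamk C lam (Suc (Suc T))) (Suc (Suc T)) p i (Suc k) = pre_f C (lamk C lam (Suc T)) (Suc T) p i k"
proof (induction k)
  case 0 then show ?case by simp
next
  case (Suc k)
  note tr = pre_ep_trunc[where p=p and T="Suc T", OF assms(1)]
  show ?case
  proof (cases "k = 0")
    case True
    have "int (eps C i (p T)) = snd (pre_ep C (lamk C lam (Suc T)) (Suc T) p i 0)"
      using assms(2) by (simp add: bbar_eps)
    then show ?thesis using True tr[where k=0]
      by (simp add: Let_def)
  next
    case False
    have e: "Suc (Suc T) - Suc (Suc k) = Suc T - Suc k" by simp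
    have IH: "pre_f C (lamk C lam (Suc (Suc T))) (Suc (Suc T)) p i (Suc k) =
              pre_f C (lamk C lam (Suc T)) (Suc T) p i k"
      using False Suc.prems by (intro Suc.IH) auto
    show ?thesis
      by (simp only: pre_f.simps(2)[where T="Suc (Suc T)" and k="Suc k"] pre_f.simps(2)[where T="Suc T" and k="k"] e IH tr)
  qed
qed

lemma path_f_eq:
  assumes "\<forall>n\<ge>N. p n = ground C lam n" "N < T"
  shows "path_f C lam i p = pre_f C (lamk C lam T) T p i T"
proof -
  define N0 where "N0 = tail_start C lam p"
  have N0: "\<forall>n\<ge>N0. p n = ground C lam n"
    unfolding N0_def tail_start_def by (rule LeastI[of _ N]) (rule assms(1))
  have N0N: "N0 \<le> N"
    unfolding N0_def tail_start_def by (rule Least_le) (rule assms(1))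
  have "Suc N0 \<le> T" using N0N assms(2) by simp
  then have "pre_f C (lamk C lam T) T p i T = pre_f C (lamk C lam (Suc N0)) (Suc N0) p i (Suc N0)"
  proof (induction T rule: dec_induct)
    case base then show ?case by simp
  next
    case (step T)
    then obtain T' where T': "T = Suc T'" "N0 \<le> T'" by (cases T) auto
    have "pre_f C (lamk C lam (Suc (Suc T'))) (Suc (Suc T')) p i (Suc (Suc T')) =
          pre_f C (lamk C lam (Suc T')) (Suc T') p i (Suc T')"
      by (rule pre_f_trunc) (use N0 T' in \<open>auto simp: ground_def\<close>)
    then show ?case using step T' by simp
  qed
  then show ?thesis unfolding path_f_def N0_def[symmetric] by (simp add: Let_def)
qed

lemma pre_f_skip:
  assumes "K \<le> k" "k \<le> T"
    "\<forall>k'. K < k' \<longrightarrow> k' \<le> k \<longrightarrow> int (eps C i (p (T - k'))) < snd (pre_ep C tp T p i (k' - 1))"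
  shows "pre_f C tp T p i k = pre_f C tp T p i K"
  using assms
proof (induction k rule: dec_induct)
  case base then show ?case by simp
next
  case (step k)
  have "int (eps C i (p (T - Suc k))) < snd (pre_ep C tp T p i k)"
    using step.prems step.hyps by (metis diff_Suc_1 le_refl less_Suc_eq_le)
  then have "pre_f C tp T p i (Suc k) = pre_f C tp T p i k" by (simp add: Let_def)
  also have "\<dots> = pre_f C tp T p i K" using step by auto
  finally show ?case .
qed

end



context pcr begin

lemma pre_ep_Suc_snd:
  "snd (pre_ep C tp T p i (Suc k)) =
    max (int (phi C i (p (T - Suc k))))
        (snd (pre_ep C tp T p i k) + int (phi C i (p (T - Suc k))) - int (eps C i (p (T - Suc k))))"
  by (simp add: Let_def)

lemma pre_f_Suc_skip:
  "int (eps C i (p (T - Suc k))) < snd (pre_ep C tp T p i k) \<Longrightarrow>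
   pre_f C tp T p i (Suc k) = pre_f C tp T p i k"
  by (simp add: Let_def)

lemma pre_f_Suc_act:
  "\<not> int (eps C i (p (T - Suc k))) < snd (pre_ep C tp T p i k) \<Longrightarrow>
   pre_f C tp T p i (Suc k) = map_option (\<lambda>b'. p(T - Suc k := b')) (ff C i (p (T - Suc k)))"
  by (simp add: Let_def)

lemma fmax_f: "ff C i b = Some b' \<Longrightarrow> fmax C i b' = fmax C i b"
  using iterf[of i "Suc 0" b b'] by (simp add: iter_opt_Suc)

lemma L1:
  assumes r: "r < T" and ph: "0 < phi C i (p r)"
    and pre: "snd (pre_ep C tp T p i (T - Suc r)) \<le> int (eps C i (p r))"
    and below: "\<forall>m<r. eps C i (p m) = 0"
  shows "pre_f C tp T p i T = map_option (\<lambda>b'. p(r := b')) (ff C i (p r))"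
proof -
  define K where "K = T - Suc r"
  have K1: "T - r = Suc K" and K2: "T - Suc K = r" using r unfolding K_def by auto
  have act: "pre_f C tp T p i (Suc K) = map_option (\<lambda>b'. p(r := b')) (ff C i (p r))"
    using pre_f_Suc_act[of i p T K tp] pre unfolding K2 K_def[symmetric] by simp
  have pos: "0 < snd (pre_ep C tp T p i k)" if "Suc K \<le> k" "k \<le> T" for k
    using that
  proof (induction k rule: dec_induct)
    case base
    show ?case using pre_ep_Suc_snd[of tp T p i K] ph unfolding K2 by simp
  next
    case (step k)
    have "T - Suc k < r" using step.hyps step.prems K1 by simp
    then have "eps C i (p (T - Suc k)) = 0" using below by simp
    then show ?case using pre_ep_Suc_snd[of tp T p i k] step by simp
  qed
  have "pre_f C tp T p i T = pre_f C tp T p i (Suc K)"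
  proof (rule pre_f_skip)
    show "Suc K \<le> T" using K1 by simp
    show "T \<le> T" by simp
    show "\<forall>k'. Suc K < k' \<longrightarrow> k' \<le> T \<longrightarrow> int (eps C i (p (T - k'))) < snd (pre_ep C tp T p i (k' - 1))"
    proof (intro allI impI)
      fix k' assume k': "Suc K < k'" "k' \<le> T"
      have "T - k' < r" using k' K1 by simp
      then have "eps C i (p (T - k')) = 0" using below by simp
      moreover have "0 < snd (pre_ep C tp T p i (k' - 1))" using k' by (intro pos) auto
      ultimately show "int (eps C i (p (T - k'))) < snd (pre_ep C tp T p i (k' - 1))" by simp
    qed
  qed
  then show ?thesis using act by simp
qed

lemma L2:
  assumes "\<forall>n\<ge>N. p n = ground C lam n" "N < T" "r < N"
    "snd (pre_ep C (lamk C lam T) T p i (T - Suc r)) \<le> int (eps C i (p r))"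
    "\<forall>m<r. eps C i (p m) = 0"
  shows "iter_opt (path_f C lam i) (phi C i (p r)) p = Some (p(r := fmax C i (p r)))"
proof -
  have "phi C i (p r) = n \<Longrightarrow> iter_opt (path_f C lam i) n p = Some (p(r := fmax C i (p r)))" for n
    using assms(1,4,5)
  proof (induction n arbitrary: p)
    case 0 then show ?case by (simp add: fmax_phi0)
  next
    case (Suc n)
    obtain b' where b': "ff C i (p r) = Some b'"
      using Suc.prems(1) phi0[of i "p r"] by (cases "ff C i (p r)") auto
    have pf: "path_f C lam i p = Some (p(r := b'))"
      using path_f_eq[OF Suc.prems(2) assms(2), of i] L1[of r T i p] Suc.prems b' assms by simp
    define p' where "p' = p(r := b')"
    have g: "\<forall>n\<ge>N. p' n = ground C lam n" using Suc.prems(2) assms(3) unfolding p'_def by auto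
    have pe: "pre_ep C (lamk C lam T) T p' i (T - Suc r) = pre_ep C (lamk C lam T) T p i (T - Suc r)"
      by (rule pre_ep_cong) (auto simp: p'_def)
    have "phi C i (p' r) = n" using phi_f[OF b'] Suc.prems(1) by (simp add: p'_def)
    moreover have "snd (pre_ep C (lamk C lam T) T p' i (T - Suc r)) \<le> int (eps C i (p' r))"
      using pe Suc.prems(3) eps_f[OF b'] by (simp add: p'_def)
    moreover have "\<forall>m<r. eps C i (p' m) = 0" using Suc.prems(4) by (simp add: p'_def)
    ultimately have IH: "iter_opt (path_f C lam i) n p' = Some (p'(r := fmax C i (p' r)))"
      using Suc.IH g by blast
    have "p'(r := fmax C i (p' r)) = p(r := fmax C i (p r))"
      using fmax_f[OF b'] by (simp add: p'_def)
    then show ?case using IH pf by (simp only: iter_opt_Suc p'_def bind.simps)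
  qed
  then show ?thesis by simp
qed

lemma L2post:
  assumes "r < T" "phi C i (p r) = 0"
    "snd (pre_ep C tp T p i (T - Suc r)) \<le> int (eps C i (p r))"
  shows "snd (pre_ep C tp T p i (T - r)) = 0"
proof -
  define K where "K = T - Suc r"
  have K1: "T - r = Suc K" and K2: "T - Suc K = r" using assms(1) unfolding K_def by auto
  show ?thesis using pre_ep_Suc_snd[of tp T p i K] assms unfolding K1 K2 K_def[symmetric] by simp
qed

lemma L3:
  assumes "\<forall>n\<ge>N. p n = ground C lam n" "N < T" "s \<le> N"
    "snd (pre_ep C (lamk C lam T) T p i (T - s)) = 0" "eps C i c = 0" "\<forall>m<s. p m = c"
  shows "iter_opt (path_f C lam i) (s * phi C i c) p = Some (\<lambda>m. if m < s then fmax C i c else p m)"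
  using assms(1,3,4,6)
proof (induction s arbitrary: p)
  case 0 then show ?case by simp
next
  case (Suc s)
  have ps: "p s = c" using Suc.prems by simp
  have it1: "iter_opt (path_f C lam i) (phi C i c) p = Some (p(s := fmax C i c))"
    using L2[of N p T s i] Suc.prems assms(2,5) ps by simp
  define p1 where "p1 = p(s := fmax C i c)"
  have g: "\<forall>n\<ge>N. p1 n = ground C lam n" using Suc.prems unfolding p1_def by auto
  have pe: "pre_ep C (lamk C lam T) T p1 i (T - Suc s) = pre_ep C (lamk C lam T) T p i (T - Suc s)"
    by (rule pre_ep_cong) (auto simp: p1_def)
  have "snd (pre_ep C (lamk C lam T) T p1 i (T - s)) = 0"
  proof (rule L2post)
    show "s < T" using Suc.prems assms(2) by simp
    show "phi C i (p1 s) = 0" using fmax_props by (simp add: p1_def)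
    show "snd (pre_ep C (lamk C lam T) T p1 i (T - Suc s)) \<le> int (eps C i (p1 s))"
      using pe Suc.prems(3) by (simp add: p1_def)
  qed
  moreover have "\<forall>m<s. p1 m = c" using Suc.prems by (simp add: p1_def)
  ultimately have IH: "iter_opt (path_f C lam i) (s * phi C i c) p1 = Some (\<lambda>m. if m < s then fmax C i c else p1 m)"
    using Suc.IH g Suc.prems(2) by simp
  have fe: "(\<lambda>m. if m < s then fmax C i c else p1 m) = (\<lambda>m. if m < Suc s then fmax C i c else p m)"
    by (auto simp: p1_def fun_eq_iff)
  have "Suc s * phi C i c = phi C i c + s * phi C i c" by simp
  then show ?case using it1 IH fe by (simp add: iter_opt_add p1_def)
qed

end



definition Wt :: "('i, 'b, 'z) crystal_scheme \<Rightarrow> ('i \<Rightarrow> nat) \<Rightarrow> nat \<Rightarrow> (nat \<Rightarrow> 'b) \<Rightarrow> 'i \<Rightarrow> int" where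
  "Wt C lam T p x = int (lamk C lam T x) + (\<Sum>n<T. wt C (p n) x)"

lemma sum_if_const: "(\<Sum>n<j. f (if n < j then c else g n)) = of_nat j * (f c :: int)"
  by simp

context pcr begin

lemma Wt_inv:
  assumes "\<forall>n\<ge>N. p n = ground C lam n" "N \<le> T"
  shows "Wt C lam T p = Wt C lam N p"
  using assms(2)
proof (induction T rule: dec_induct)
  case base then show ?case by simp
next
  case (step T)
  have pT: "p T = bbar C lam (Suc T)" using assms(1) step.hyps by (simp add: ground_def)
  have "Wt C lam (Suc T) p x = Wt C lam T p x" for x
    unfolding Wt_def using bbar_wt[of T x] pT by simp
  then show ?case using step.IH by auto
qed

lemma ground_eq: "ground C lam n = bbar C lam (Suc n)" by (simp add: ground_def)

lemma caseA:
  assumes ec: "eps C i c = 0" and lz: "lamk C lam j i = 0"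
  defines "P \<equiv> (\<lambda>n. if n < j then c else ground C lam n)"
    and "P' \<equiv> (\<lambda>n. if n < j then fmax C i c else ground C lam n)"
  shows "0 \<le> Wt C lam j P i \<and> iter_opt (path_f C lam i) (nat (Wt C lam j P i)) P = Some P'
     \<and> Wt C lam j P' = refl A i (Wt C lam j P)"
proof -
  have wc: "wt C c i = int (phi C i c)" using wt_pe[of i c] ec by simp
  have W: "Wt C lam j P x = int (lamk C lam j x) + of_nat j * wt C c x" for x
    unfolding Wt_def P_def by simp
  have Wi: "Wt C lam j P i = int (j * phi C i c)" using W[of i] lz wc by simp
  have g: "\<forall>n\<ge>j. P n = ground C lam n" unfolding P_def by simp
  have pe1: "pre_ep C (lamk C lam (Suc j)) (Suc j) P i (Suc 0) = pre_ep C (lamk C lam j) j P i 0"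
    by (rule pre_ep_trunc) (simp add: P_def ground_def)
  have s0: "snd (pre_ep C (lamk C lam (Suc j)) (Suc j) P i (Suc j - j)) = 0"
    using pe1 lz by simp
  have it: "iter_opt (path_f C lam i) (j * phi C i c) P = Some (\<lambda>m. if m < j then fmax C i c else P m)"
    by (rule L3[OF g _ _ s0 ec]) (auto simp: P_def)
  have "(\<lambda>m. if m < j then fmax C i c else P m) = P'" by (auto simp: P_def P'_def fun_eq_iff)
  moreover have "Wt C lam j P' x = refl A i (Wt C lam j P) x" for x
  proof -
    have "Wt C lam j P' x = int (lamk C lam j x) + of_nat j * wt C (fmax C i c) x"
      unfolding Wt_def P'_def by simp
    also have "\<dots> = int (lamk C lam j x) + of_nat j * (wt C c x - int (phi C i c) * A x i)"
      using fmax_props[of i c] by simp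
    also have "\<dots> = refl A i (Wt C lam j P) x"
      unfolding refl_def W[of x] Wi by (simp add: algebra_simps)
    finally show ?thesis .
  qed
  moreover have "nat (Wt C lam j P i) = j * phi C i c" unfolding Wi by (simp only: nat_int)
  ultimately show ?thesis using it Wi by auto
qed

lemma caseB:
  assumes hyp: "0 < j \<longrightarrow> eps C i c = 0 \<and>
                 iter_opt (ff C i) (lamk C lam (Suc j) i) c = Some (bbar C lam (Suc j))"
  defines "P \<equiv> (\<lambda>n. if n < j then c else ground C lam n)"
    and "P' \<equiv> (\<lambda>n. if n < Suc j then fmax C i (bbar C lam (Suc j)) else ground C lam n)"
  shows "0 \<le> Wt C lam j P i \<and> iter_opt (path_f C lam i) (nat (Wt C lam j P i)) P = Some P'
     \<and> Wt C lam (Suc j) P' = refl A i (Wt C lam j P)"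
proof -
  define b where "b = bbar C lam (Suc j)"
  define b' where "b' = fmax C i b"
  have W: "Wt C lam j P x = int (lamk C lam j x) + of_nat j * wt C c x" for x
    unfolding Wt_def P_def by simp
  have jc: "of_nat j * wt C c i = int (j * phi C i c)"
  proof (cases "j = 0")
    case True then show ?thesis by simp
  next
    case False
    then have "eps C i c = 0" using hyp by simp
    then show ?thesis using wt_pe[of i c] by simp
  qed
  have Wi: "Wt C lam j P i = int (lamk C lam j i + j * phi C i c)" using W[of i] jc by simp
  have g: "\<forall>n\<ge>Suc j. P n = ground C lam n" unfolding P_def by simp
  have Pj: "P j = b" unfolding P_def b_def ground_def by simp
  have pe1: "pre_ep C (lamk C lam (Suc (Suc j))) (Suc (Suc j)) P i (Suc 0) = pre_ep C (lamk C lam (Suc j)) (Suc j) P i 0"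
    by (rule pre_ep_trunc) (simp add: P_def ground_def)
  have pre1: "snd (pre_ep C (lamk C lam (Suc (Suc j))) (Suc (Suc j)) P i (Suc (Suc j) - Suc j)) \<le> int (eps C i (P j))"
    using pe1 Pj by (simp add: b_def bbar_eps)
  have below: "\<forall>m<j. eps C i (P m) = 0" using hyp by (auto simp: P_def)
  have it1: "iter_opt (path_f C lam i) (phi C i (P j)) P = Some (P(j := fmax C i (P j)))"
    by (rule L2[OF g _ _ pre1 below]) auto
  define P1 where "P1 = P(j := b')"
  have phb: "phi C i b = lamk C lam j i" unfolding b_def by (rule bbar_phi)
  have it1': "iter_opt (path_f C lam i) (lamk C lam j i) P = Some P1"
    using it1 Pj phb by (simp add: P1_def b'_def)
  have pe: "pre_ep C (lamk C lam (Suc (Suc j))) (Suc (Suc j)) P1 i (Suc (Suc j) - Suc j) =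
            pre_ep C (lamk C lam (Suc (Suc j))) (Suc (Suc j)) P i (Suc (Suc j) - Suc j)"
    by (rule pre_ep_cong) (auto simp: P1_def)
  have s0: "snd (pre_ep C (lamk C lam (Suc (Suc j))) (Suc (Suc j)) P1 i (Suc (Suc j) - j)) = 0"
  proof (rule L2post)
    show "j < Suc (Suc j)" by simp
    show "phi C i (P1 j) = 0" using fmax_props by (simp add: P1_def b'_def)
    show "snd (pre_ep C (lamk C lam (Suc (Suc j))) (Suc (Suc j)) P1 i (Suc (Suc j) - Suc j)) \<le> int (eps C i (P1 j))"
      using pe pre1 Pj fmax_props[of i b] by (simp add: P1_def b'_def)
  qed
  have g1: "\<forall>n\<ge>Suc j. P1 n = ground C lam n" using g by (simp add: P1_def)
  have it2: "iter_opt (path_f C lam i) (j * phi C i c) P1 = Some P'"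
  proof (cases "j = 0")
    case True
    then show ?thesis by (auto simp: P1_def P'_def P_def b'_def b_def fun_eq_iff ground_def)
  next
    case False
    then have ec: "eps C i c = 0" and itc: "iter_opt (ff C i) (lamk C lam (Suc j) i) c = Some b"
      using hyp b_def by auto
    have fc: "fmax C i c = b'" using iterf[OF itc] b'_def by simp
    have "iter_opt (path_f C lam i) (j * phi C i c) P1 = Some (\<lambda>m. if m < j then fmax C i c else P1 m)"
      by (rule L3[OF g1 _ _ s0 ec]) (auto simp: P1_def P_def)
    moreover have "(\<lambda>m. if m < j then fmax C i c else P1 m) = P'"
      using fc by (auto simp: P1_def P'_def P_def b'_def b_def fun_eq_iff ground_def)
    ultimately show ?thesis by simp
  qed
  have itall: "iter_opt (path_f C lam i) (nat (Wt C lam j P i)) P = Some P'"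
    unfolding Wi nat_int iter_opt_add using it1' it2 by simp
  have "Wt C lam (Suc j) P' x = refl A i (Wt C lam j P) x" for x
  proof -
    have wb: "wt C b x = int (lamk C lam j x) - int (lamk C lam (Suc j) x)"
      unfolding b_def by (rule bbar_wt)
    have wb': "wt C b' x = wt C b x - int (lamk C lam j i) * A x i"
      using fmax_props[of i b] phb by (simp add: b'_def)
    have jw: "of_nat j * wt C b' x = of_nat j * (wt C c x - int (phi C i c) * A x i)"
    proof (cases "j = 0")
      case True then show ?thesis by simp
    next
      case False
      then have itc: "iter_opt (ff C i) (lamk C lam (Suc j) i) c = Some b"
        using hyp b_def by auto
      have fc: "fmax C i c = b'" using iterf[OF itc] b'_def by simp
      show ?thesis using fmax_props[of i c] fc by simp
    qed
    have "Wt C lam (Suc j) P' x = int (lamk C lam (Suc j) x) + of_nat (Suc j) * wt C b' x"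
      unfolding Wt_def P'_def b'_def b_def by simp
    also have "\<dots> = int (lamk C lam (Suc j) x) + wt C b' x + of_nat j * wt C b' x"
      by (simp add: algebra_simps)
    also have "\<dots> = int (lamk C lam (Suc j) x) + (wt C b x - int (lamk C lam j i) * A x i)
         + of_nat j * (wt C c x - int (phi C i c) * A x i)"
      using wb' jw by simp
    also have "\<dots> = refl A i (Wt C lam j P) x"
      unfolding refl_def W[of x] Wi wb by (simp add: algebra_simps)
    finally show ?thesis .
  qed
  then show ?thesis using itall Wi by auto
qed

end



lemma bseq_in_Bset:
  assumes "is_crystal A C"
  shows "bseq C lam idx j a \<in> Bset C lam idx j a"
proof (induction a)
  case 0 then show ?case by simp
next
  case (Suc a)
  interpret cryst A C by (rule cryst.intro[OF assms])
  show ?case using Suc fmax_iter by auto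
qed

lemma arith_lt:
  assumes "0 < d" "(m::nat) mod d + 1 < d"
  shows "Suc m div d = m div d" "Suc m mod d = m mod d + 1"
  using assms by (simp_all add: div_Suc mod_Suc)

lemma arith_eq:
  assumes "0 < d" "(m::nat) mod d + 1 = d"
  shows "Suc m div d = m div d + 1" "Suc m mod d = 0"
  using assms by (simp_all add: div_Suc mod_Suc)

theorem mainTheorem1:
  fixes A :: "'i::finite \<Rightarrow> 'i \<Rightarrow> int" and i0 :: 'i
    and C :: "('i, 'b::finite) crystal" and l :: nat
    and lam :: "'i \<Rightarrow> nat" and d :: nat and idx :: "nat \<Rightarrow> nat \<Rightarrow> 'i"
  assumes affine: "affine_gcm A"
    and node0: "special_node A i0"
    and perfect: "perfect_crystal A i0 C l"
    and lam_level: "level A lam = l"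
    and d_pos: "d > 0"
    and III: "\<forall>j\<ge>1. \<forall>a\<in>{1..d}. \<forall>b\<in>Bset C lam idx j (a - 1).
                 lamk C lam j (idx j a) \<le> eps C (idx j a) b"
    and cond_eps_phi: "\<forall>j\<ge>1. \<forall>a\<in>{1..d}.
         (let i' = (if a = d then idx (Suc j) 1 else idx j (Suc a))
          in eps C i' (bseq C lam idx j a) = 0 \<and> phi C i' (bseq C lam idx j a) > 0)"
    and cond_next: "\<forall>j\<ge>1. iter_opt (ff C (idx (Suc j) 1))
            (lamk C lam (Suc j) (idx (Suc j) 1)) (bseq C lam idx j d)
          = Some (bbar C lam (Suc j))"
  shows "\<forall>k. ext_path A C lam (wword idx d k) =
           Some (\<lambda>n. if n < pos_j d k then bseq C lam idx (pos_j d k) (pos_a d k)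
                     else bbar C lam (Suc n))"
proof -
  interpret pcr A C i0 l lam by unfold_locales (rule perfect, rule lam_level)
  define P where "P k = (\<lambda>n. if n < pos_j d k then bseq C lam idx (pos_j d k) (pos_a d k)
                     else bbar C lam (Suc n))" for k
  have main: "ext_path A C lam (wword idx d k) = Some (P k) \<and>
      Wt C lam (pos_j d k) (P k) = weyl_act A (wword idx d k) (\<lambda>j. int (lam j))" for k
  proof (induction k)
    case 0
    have P0: "P 0 = ground C lam" unfolding P_def pos_j_def pos_a_def ground_def
      by (auto simp: fun_eq_iff)
    have "Wt C lam 1 (P 0) = Wt C lam 0 (P 0)"
      by (rule Wt_inv[of 0]) (auto simp: P0)
    also have "\<dots> = (\<lambda>j. int (lam j))" by (simp add: Wt_def lamk_0 fun_eq_iff)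
    finally show ?case using P0 by (simp add: pos_j_def)
  next
    case (Suc k)
    define i where "i = idx (k div d + 1) (k mod d + 1)"
    have ww: "wword idx d (Suc k) = i # wword idx d k" by (simp add: i_def)
    have key: "0 \<le> Wt C lam (pos_j d k) (P k) i \<and>
        iter_opt (path_f C lam i) (nat (Wt C lam (pos_j d k) (P k) i)) (P k) = Some (P (Suc k)) \<and>
        Wt C lam (pos_j d (Suc k)) (P (Suc k)) = refl A i (Wt C lam (pos_j d k) (P k))"
    proof (cases "k = 0")
      case True
      have i1: "i = idx 1 1" using True d_pos by (simp add: i_def)
      have Pk: "P k = (\<lambda>n. if n < 0 then bbar C lam 1 else ground C lam n)"
        using True unfolding P_def pos_j_def pos_a_def ground_def by (auto simp: fun_eq_iff)
      have PS: "P (Suc k) = (\<lambda>n. if n < Suc 0 then fmax C i (bbar C lam (Suc 0)) else ground C lam n)"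
        using True d_pos unfolding P_def pos_j_def pos_a_def ground_def i1 by (auto simp: fun_eq_iff)
      have pj: "pos_j d k = 1" "pos_j d (Suc k) = Suc 0" using True d_pos by (simp_all add: pos_j_def)
      have Wi: "Wt C lam 1 (P k) = Wt C lam 0 (P k)"
        by (rule Wt_inv[of 0]) (auto simp: Pk)
      show ?thesis using caseB[of 0 i "bbar C lam 1"] unfolding pj Wi Pk[symmetric] PS[symmetric]
        by simp
    next
      case False
      define j where "j = (k - 1) div d + 1"
      define a where "a = (k - 1) mod d + 1"
      have j1: "j \<ge> 1" unfolding j_def by simp
      have ad: "a \<le> d" "1 \<le> a" unfolding a_def using d_pos by (simp_all add: Suc_leI)
      have pjk: "pos_j d k = j" "pos_a d k = a" using False by (simp_all add: pos_j_def pos_a_def j_def a_def)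
      have ksuc: "k = Suc (k - 1)" using False by simp
      show ?thesis
      proof (cases "a < d")
        case True
        have ar: "k div d = (k - 1) div d" "k mod d = (k - 1) mod d + 1"
          using arith_lt[of d "k - 1"] True d_pos ksuc unfolding a_def by auto
        have ii: "i = idx j (Suc a)" unfolding i_def ar j_def a_def by simp
        have pjs: "pos_j d (Suc k) = j" "pos_a d (Suc k) = Suc a"
          unfolding pos_j_def pos_a_def using ar by (simp_all add: j_def a_def)
        define c where "c = bseq C lam idx j a"
        have ec: "eps C i c = 0"
          using cond_eps_phi[rule_format, OF j1, of a] ad True unfolding c_def ii by (simp add: Let_def)
        have "lamk C lam j i \<le> eps C i c"
        proof -
          have "Suc a \<in> {1..d}" using True by simp
          then show ?thesis using III[rule_format, OF j1, of "Suc a"] bseq_in_Bset[OF cr, of lam idx j a]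
            unfolding c_def ii by simp
        qed
        then have lz: "lamk C lam j i = 0" using ec by simp
        have Pk: "P k = (\<lambda>n. if n < j then c else ground C lam n)"
          unfolding P_def pjk c_def ground_def by simp
        have PS: "P (Suc k) = (\<lambda>n. if n < j then fmax C i c else ground C lam n)"
          unfolding P_def pjs c_def ground_def ii by (simp only: bseq.simps(2))
        show ?thesis using caseA[OF ec lz] unfolding pjk pjs Pk[symmetric] PS[symmetric] by simp
      next
        case False
        then have aeq: "a = d" using ad by simp
        have ar: "k div d = (k - 1) div d + 1" "k mod d = 0"
          using arith_eq[of d "k - 1"] aeq d_pos ksuc unfolding a_def by auto
        have ii: "i = idx (Suc j) 1" unfolding i_def ar j_def by simp
        have pjs: "pos_j d (Suc k) = Suc j" "pos_a d (Suc k) = 1"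
          unfolding pos_j_def pos_a_def using ar by (simp_all add: j_def)
        define c where "c = bseq C lam idx j d"
        have ec: "eps C i c = 0"
          using cond_eps_phi[rule_format, OF j1, of d] d_pos unfolding c_def ii by (simp add: Let_def)
        have itc: "iter_opt (ff C i) (lamk C lam (Suc j) i) c = Some (bbar C lam (Suc j))"
          using cond_next j1 unfolding c_def ii by simp
        have Pk: "P k = (\<lambda>n. if n < j then c else ground C lam n)"
          unfolding P_def pjk c_def ground_def aeq by simp
        have PS: "P (Suc k) = (\<lambda>n. if n < Suc j then fmax C i (bbar C lam (Suc j)) else ground C lam n)"
          unfolding P_def pjs ground_def ii by (simp only: One_nat_def bseq.simps)
        show ?thesis using caseB[of j i c] ec itc unfolding pjk pjs Pk[symmetric] PS[symmetric] by simp
      qed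
    qed
    show ?case
      using Suc.IH key unfolding ww by (simp add: Let_def)
  qed
  show ?thesis using main unfolding P_def by blast
qed


end
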